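(* In the setting described in the context, let $x\in\operatorname{supp}(\mu)$ be an isolated point of $\operatorname{supp}(\mu)$, and suppose that $K_n(x,x)\neq0$ for all large $n$ and that $\lim_{n\to\infty}G_n[f](x)=f(x)$ for every bounded continuous function $f$ on $\mathbb{R}$. Then \[ \lim_{n\to\infty}K_n(x,x)=\frac{1}{\mu(\{x\})}. \]
   Context: Let $r\ge1$ and let $\mu_1,\dots,\mu_r$ be positive Borel measures on $\mathbb{R}$ with all moments finite, forming a perfect system: for every $\vec n\in\mathbb{N}_0^r$ there is a monic polynomial $P_{\vec n}$ of degree $|\vec n|=n_1+\dots+n_r$ with $\int x^kP_{\vec n}\,d\mu_j=0$ for $0\le k\le n_j-1$, $1\le j\le r$. Type I polynomials $A_{\vec n}=(A_{\vec n,1},\dots,A_{\vec n,r})$: $\deg A_{\vec n,j}\le n_j-1$, $\sum_j\int x^kA_{\vec n,j}\,d\mu_j=0$ for $0\le k\le|\vec n|-2$, and $=1$ for $k=|\vec n|-1$. Let $\mu$ be a positive measure with $\mu_j\ll\mu$, $w_j=d\mu_j/d\mu$, $Q_{\vec n}=\sum_jA_{\vec n,j}w_j$. Fix a path $(\vec n_\ell)_{\ell\ge0}$ with $|\vec n_\ell|=\ell$, $\vec n_{\ell+1}=\vec n_\ell+\vec e_{i_\ell}$ ($\vec e_j$ the $j$-th unit vector), and set $p_\ell=P_{\vec n_\ell}$, $q_\ell=Q_{\vec n_{\ell+1}}$, so that $\int p_\ell q_{\ell'}\,d\mu=\delta_{\ell,\ell'}$. The Christoffel--Darboux kernel is $K_n(x,y)=\sum_{j=0}^{n-1}p_j(x)q_j(y)$.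 For bounded measurable $f$, $x\in\operatorname{supp}(\mu)$ and $K_n(x,x)\ne0$, define $G_n[f](x)=\frac{1}{K_n(x,x)}\int_{\mathbb{R}}K_n(x,y)K_n(y,x)f(y)\,d\mu(y)$. *)

theory Defs
  imports "HOL-Analysis.Analysis" "HOL-Computational_Algebra.Polynomial"
begin

text \<open>Multi-indices in N_0^r are represented as functions nat => nat; only the
  components j < r matter (components are 0-based: j = 0..r-1).\<close>

definition msize :: "nat \<Rightarrow> (nat \<Rightarrow> nat) \<Rightarrow> nat" where
  "msize r n = (\<Sum>j<r. n j)"

text \<open>The path: n_0 = 0, n_(l+1) = n_l + e_(i l).\<close>
definition path_index :: "(nat \<Rightarrow> nat) \<Rightarrow> nat \<Rightarrow> nat \<Rightarrow> nat" where
  "path_index i l j = card {m. m < l \<and> i m = j}"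

definition typeII_mops :: "nat \<Rightarrow> (nat \<Rightarrow> real measure) \<Rightarrow> ((nat \<Rightarrow> nat) \<Rightarrow> real poly) \<Rightarrow> bool" where
  "typeII_mops r \<mu>s P \<longleftrightarrow>
     (\<forall>n. lead_coeff (P n) = 1 \<and> degree (P n) = msize r n \<and>
          (\<forall>j<r. \<forall>k<n j. (\<integral>x. x ^ k * poly (P n) x \<partial>\<mu>s j) = 0))"

definition typeI_mops :: "nat \<Rightarrow> (nat \<Rightarrow> real measure) \<Rightarrow> ((nat \<Rightarrow> nat) \<Rightarrow> nat \<Rightarrow> real poly) \<Rightarrow> bool" where
  "typeI_mops r \<mu>s A \<longleftrightarrow>
     (\<forall>n. msize r n \<ge> 1 \<longrightarrow>
        (\<forall>j<r. A n j \<noteq> 0 \<longrightarrow> degree (A n j) < n j) \<and>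
        (\<forall>k<msize r n. (\<Sum>j<r. \<integral>x. x ^ k * poly (A n j) x \<partial>\<mu>s j)
                         = (if k = msize r n - 1 then 1 else 0)))"

definition Qfun :: "nat \<Rightarrow> ((nat \<Rightarrow> nat) \<Rightarrow> nat \<Rightarrow> real poly) \<Rightarrow> (nat \<Rightarrow> real \<Rightarrow> real)
                     \<Rightarrow> (nat \<Rightarrow> nat) \<Rightarrow> real \<Rightarrow> real" where
  "Qfun r A w n y = (\<Sum>j<r. poly (A n j) y * w j y)"

definition CD_kernel :: "nat \<Rightarrow> ((nat \<Rightarrow> nat) \<Rightarrow> real poly) \<Rightarrow> ((nat \<Rightarrow> nat) \<Rightarrow> nat \<Rightarrow> real poly)
     \<Rightarrow> (nat \<Rightarrow> real \<Rightarrow> real) \<Rightarrow> (nat \<Rightarrow> nat) \<Rightarrow> nat \<Rightarrow> real \<Rightarrow> real \<Rightarrow> real" where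
  "CD_kernel r P A w i n x y =
     (\<Sum>l<n. poly (P (path_index i l)) x * Qfun r A w (path_index i (Suc l)) y)"

definition G_op :: "real measure \<Rightarrow> (real \<Rightarrow> real \<Rightarrow> real) \<Rightarrow> (real \<Rightarrow> real) \<Rightarrow> real \<Rightarrow> real" where
  "G_op \<mu> K f x = (1 / K x x) * (\<integral>y. K x y * K y x * f y \<partial>\<mu>)"

definition msupp :: "real measure \<Rightarrow> real set" where
  "msupp \<mu> = {x. \<forall>e>0. emeasure \<mu> (ball x e) > 0}"

end

theory Submission
  imports Defs
begin

lemma null_off_support:
  fixes \<mu> :: "real measure"
  assumes sets_mu: "sets \<mu> = sets borel"
    and S: "open S" "S \<inter> msupp \<mu> = {}"
  shows "S \<in> null_sets \<mu>"
proof -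
  define F where "F = {B::real set. open B \<and> B \<in> null_sets \<mu>}"
  have opF: "\<And>B. B \<in> F \<Longrightarrow> open B" by (auto simp: F_def)
  obtain F' where F': "F' \<subseteq> F" "countable F'" "\<Union>F' = \<Union>F"
    using Lindelof[OF opF] by blast
  have "\<Union>F' \<in> null_sets \<mu>"
  proof -
    have "(\<Union>B\<in>F'. B) \<in> null_sets \<mu>"
      using F' by (intro null_sets_UN') (auto simp: F_def)
    then show ?thesis by simp
  qed
  moreover have "S \<subseteq> \<Union>F"
  proof
    fix y assume y: "y \<in> S"
    then have "y \<notin> msupp \<mu>" using S by auto
    then obtain e where e: "e > 0" "\<not> emeasure \<mu> (ball y e) > 0"
      by (auto simp: msupp_def)
    have "ball y e \<in> sets \<mu>" using sets_mu by simp
    then have "ball y e \<in> F" using e by (auto simp: F_def null_sets_def)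
    moreover have "y \<in> ball y e" using e by simp
    ultimately show "y \<in> \<Union>F" by blast
  qed
  moreover have "S \<in> sets \<mu>" using sets_mu S by simp
  ultimately show ?thesis using F' null_sets_subset by metis
qed

theorem proposition6:
  fixes r :: nat and \<mu>s :: "nat \<Rightarrow> real measure" and \<mu> :: "real measure"
    and P :: "(nat \<Rightarrow> nat) \<Rightarrow> real poly" and A :: "(nat \<Rightarrow> nat) \<Rightarrow> nat \<Rightarrow> real poly"
    and w :: "nat \<Rightarrow> real \<Rightarrow> real" and i :: "nat \<Rightarrow> nat" and x :: real
  assumes r: "r \<ge> 1"
    and sets_mus: "\<forall>j<r. sets (\<mu>s j) = sets borel"
    and moments: "\<forall>j<r. \<forall>k::nat. integrable (\<mu>s j) (\<lambda>t. t ^ k)"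
    and perfect: "typeII_mops r \<mu>s P"
    and typeI: "typeI_mops r \<mu>s A"
    and sets_mu: "sets \<mu> = sets borel"
    and w_meas: "\<forall>j<r. w j \<in> borel_measurable borel"
    and w_nonneg: "\<forall>j<r. \<forall>t. w j t \<ge> 0"
    and w_RN: "\<forall>j<r. \<mu>s j = density \<mu> (\<lambda>t. ennreal (w j t))"
    and path: "\<forall>l. i l < r"
    and x_supp: "x \<in> msupp \<mu>"
    and x_isolated: "\<exists>e>0. msupp \<mu> \<inter> ball x e = {x}"
    and K_nonzero: "\<forall>\<^sub>F n in sequentially. CD_kernel r P A w i n x x \<noteq> 0"
    and G_conv: "\<forall>f::real \<Rightarrow> real. continuous_on UNIV f \<and> bounded (range f) \<longrightarrow>
                   ((\<lambda>n. G_op \<mu> (CD_kernel r P A w i n) f x) \<longlongrightarrow> f x) sequentially"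
  shows "(\<lambda>n. CD_kernel r P A w i n x x) \<longlonglongrightarrow> 1 / measure \<mu> {x}"
proof -
  obtain e where e: "e > 0" "msupp \<mu> \<inter> ball x e = {x}" using x_isolated by blast
  define f where "f = (\<lambda>y::real. max 0 (1 - \<bar>y - x\<bar> / e))"
  have fc: "continuous_on UNIV f" unfolding f_def using e by (intro continuous_intros) auto
  have fb: "bounded (range f)"
  proof -
    have "\<And>y. \<bar>f y\<bar> \<le> 1" using e unfolding f_def by auto
    then show ?thesis by (auto simp: bounded_iff)
  qed
  have fx: "f x = 1" by (simp add: f_def)
  have f0: "f y = 0" if "y \<notin> ball x e" for y
    using that e by (auto simp: f_def dist_real_def divide_simps)
  define N where "N = ball x e - {x}"
  have N: "N \<in> null_sets \<mu>"
    using null_off_support[OF sets_mu, of N] e by (auto simp: N_def)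
  let ?K = "\<lambda>n. CD_kernel r P A w i n"
  have meas: "(\<lambda>y. ?K n x y * ?K n y x * f y) \<in> borel_measurable \<mu>" for n
  proof -
    have "(\<lambda>y. ?K n x y * ?K n y x * f y) \<in> borel_measurable borel"
    proof -
      have wm: "\<And>j. j < r \<Longrightarrow> w j \<in> borel_measurable borel" using w_meas by blast
      have "(\<lambda>y. ?K n x y) \<in> borel_measurable borel"
      proof -
        have pm: "\<And>p. (\<lambda>y::real. poly p y) \<in> borel_measurable borel"
          by (intro borel_measurable_continuous_onI continuous_on_poly continuous_on_id)
        show ?thesis
          unfolding CD_kernel_def Qfun_def using wm pm
          by (intro borel_measurable_sum borel_measurable_times borel_measurable_const) auto
      qed
      moreover have "continuous_on UNIV (\<lambda>y. ?K n y x)"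
        unfolding CD_kernel_def by (intro continuous_intros)
      moreover have "(\<lambda>y. ?K n y x) \<in> borel_measurable borel"
        using calculation(2) by (rule borel_measurable_continuous_onI)
      moreover have "f \<in> borel_measurable borel"
        using fc by (rule borel_measurable_continuous_onI)
      ultimately show ?thesis
        by (intro borel_measurable_times) auto
    qed
    then show ?thesis using measurable_cong_sets[OF sets_mu refl] by blast
  qed
  have G_eq: "G_op \<mu> (?K n) f x = ?K n x x * measure \<mu> {x}" if nz: "?K n x x \<noteq> 0" for n
  proof -
    have "(\<integral>y. ?K n x y * ?K n y x * f y \<partial>\<mu>) = (\<integral>y. (?K n x x * ?K n x x) * indicator {x} y \<partial>\<mu>)"
    proof (rule integral_cong_AE)
      show "(\<lambda>y. ?K n x y * ?K n y x * f y) \<in> borel_measurable \<mu>" by (rule meas)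
      show "(\<lambda>y. (?K n x x * ?K n x x) * indicator {x} y) \<in> borel_measurable \<mu>"
        using sets_mu by (simp add: measurable_cong_sets[OF sets_mu refl])
      show "AE y in \<mu>. ?K n x y * ?K n y x * f y = (?K n x x * ?K n x x) * indicator {x} y"
      proof (rule AE_I'[OF N])
        show "{y \<in> space \<mu>. \<not> (?K n x y * ?K n y x * f y = (?K n x x * ?K n x x) * indicator {x} y)} \<subseteq> N"
        proof
          fix y assume y: "y \<in> {y \<in> space \<mu>. \<not> (?K n x y * ?K n y x * f y = (?K n x x * ?K n x x) * indicator {x} y)}"
          show "y \<in> N"
          proof (cases "y \<in> ball x e")
            case True then show ?thesis using y fx by (auto simp: N_def)
          next
            case False then show ?thesis using y f0[OF False] e(1) by (auto simp: indicator_def)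
          qed
        qed
      qed
    qed
    also have "\<dots> = ?K n x x * ?K n x x * measure \<mu> {x}"
      using sets_mu by (simp add: sets_eq_imp_space_eq)
    finally show ?thesis using nz unfolding G_op_def by simp
  qed
  have lim1: "(\<lambda>n. ?K n x x * measure \<mu> {x}) \<longlonglongrightarrow> 1"
  proof -
    have "(\<lambda>n. G_op \<mu> (?K n) f x) \<longlonglongrightarrow> 1" using G_conv fc fb fx by metis
    moreover have "\<forall>\<^sub>F n in sequentially. G_op \<mu> (?K n) f x = ?K n x x * measure \<mu> {x}"
        using K_nonzero G_eq by (auto elim: eventually_mono)
    ultimately show ?thesis by (rule Lim_transform_eventually)
  qed
  have m0: "measure \<mu> {x} \<noteq> 0"
  proof
    assume "measure \<mu> {x} = 0"
    then have "(\<lambda>n. 0::real) \<longlonglongrightarrow> 1" using lim1 by simp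
    then have "(0::real) = 1" by (rule LIMSEQ_unique[OF tendsto_const])
    then show False by simp
  qed
  have "(\<lambda>n. ?K n x x * measure \<mu> {x} / measure \<mu> {x}) \<longlonglongrightarrow> 1 / measure \<mu> {x}"
    by (intro tendsto_divide lim1 tendsto_const m0)
  then show ?thesis using m0 by simp
qed

end
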